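(* Let $(\lambda,\vartheta,\zeta_0)$ be fluid model data as in the context, let $\zeta(\cdot)$ be a measure valued fluid model solution with total mass $z(\cdot)$, and let $t_0>0$. Define $z(t_0,t)=z(t_0+t)$ and $S(t_0,u,v)=\int_u^v z(t_0,r)^{-1}dr$. Then for all $t\ge0$, $$z(t_0,t)=\zeta(t_0)\big([S(t_0,0,t),\infty]\times[t,\infty]\big)+\lambda\int_0^t\mathbf P\big(B\ge S(t_0,s,t);\,D\ge t-s\big)ds.$$
   Context: $\overline{\mathbb R}_+=[0,\infty]$; $\mathbf M_1$ the finite nonnegative Borel measures on $\overline{\mathbb R}_+^2$ with the weak topology. Fluid model data: $\lambda>0$; $\vartheta$ a Borel probability measure on $\overline{\mathbb R}_+^2$ with $\vartheta(\{0\}\times\overline{\mathbb R}_+)=\vartheta(\overline{\mathbb R}_+\times\{0\})=\vartheta(\{(\infty,\infty)\})=0$, $(B,D)$ a random pair with law $\vartheta$, $\rho=\lambda\mathbf E[B]>1$; $\zeta_0\in\mathbf M_1$ with marginals free of atoms in $[0,\infty)$. Corner sets $\mathcal C=\{[x,\infty)\times[y,\infty):x,y\in[0,\infty)\}\cup\{[x,\infty]\times[y,\infty]:x,y\in\overline{\mathbb R}_+\}$. A measure valued fluid model solution is a continuous $\zeta:[0,\infty)\to\mathbf M_1$ with total mass $z(t)=\zeta(t)(\overline{\mathbb R}_+^2)$, $S(u,v)=\int_u^vz(s)^{-1}ds$, such that $\inf_{t>a}z(t)>0$ for all $a>0$ and $\zeta(t)(C)=\zeta_0(C+(S(0,t),t))+\lambda\int_0^t\vartheta(C+(S(s,t),t-s))ds$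 for all $C\in\mathcal C$, $t\ge0$ ($A+w=\{a+w:a\in A\}$). *)

theory Defs
  imports "HOL-Analysis.Analysis" "HOL-Probability.Probability"
begin

text \<open>The state space [0,\<infinity>]^2 is modelled as ennreal \<times> ennreal with its Borel sets.\<close>

type_synonym pt = "ennreal \<times> ennreal"

definition M1 :: "pt measure \<Rightarrow> bool" where
  "M1 \<mu> \<longleftrightarrow> sets \<mu> = sets (borel :: pt measure) \<and> finite_measure \<mu>"

definition corner_sets :: "pt set set" where
  "corner_sets =
     {{p. ennreal x \<le> fst p \<and> fst p < \<infinity> \<and> ennreal y \<le> snd p \<and> snd p < \<infinity>} | x y. x \<ge> 0 \<and> y \<ge> 0}
   \<union> {{x..} \<times> {y..} | x y :: ennreal. True}"

definition shift :: "pt set \<Rightarrow> pt \<Rightarrow> pt set" (infixl "\<oplus>\<^sub>s" 65) where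
  "A \<oplus>\<^sub>s w = (\<lambda>a. (fst a + fst w, snd a + snd w)) ` A"

definition mass :: "(real \<Rightarrow> pt measure) \<Rightarrow> real \<Rightarrow> real" where
  "mass \<zeta> t = measure (\<zeta> t) UNIV"

text \<open>S(u,v) = \<integral>_u^v z(s)^{-1} ds, valued in [0,\<infinity>] (1/0 read as \<infinity>).\<close>
definition Sint :: "(real \<Rightarrow> real) \<Rightarrow> real \<Rightarrow> real \<Rightarrow> ennreal" where
  "Sint z u v = (\<integral>\<^sup>+ r. indicator {u..v} r * inverse (ennreal (z r)) \<partial>lborel)"

text \<open>Continuity into M_1 with the weak topology: integrals of bounded continuous
  functions depend continuously on t.\<close>
definition weakly_continuous_on :: "real set \<Rightarrow> (real \<Rightarrow> pt measure) \<Rightarrow> bool" where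
  "weakly_continuous_on T \<zeta> \<longleftrightarrow>
     (\<forall>f :: pt \<Rightarrow> real. continuous_on UNIV f \<and> bounded (range f) \<longrightarrow>
        continuous_on T (\<lambda>t. integral\<^sup>L (\<zeta> t) f))"

definition fluid_model_data :: "real \<Rightarrow> pt measure \<Rightarrow> pt measure \<Rightarrow> bool" where
  "fluid_model_data lam th \<zeta>0 \<longleftrightarrow>
     lam > 0 \<and>
     prob_space th \<and> sets th = sets (borel :: pt measure) \<and>
     emeasure th ({0} \<times> UNIV) = 0 \<and> emeasure th (UNIV \<times> {0}) = 0 \<and>
     emeasure th {(\<infinity>, \<infinity>)} = 0 \<and>
     ennreal lam * (\<integral>\<^sup>+ p. fst p \<partial>th) > 1 \<and>
     M1 \<zeta>0 \<and>
     (\<forall>x::ennreal. x < \<infinity> \<longrightarrow> emeasure \<zeta>0 ({x} \<times> UNIV) = 0 \<and> emeasure \<zeta>0 (UNIV \<times> {x}) = 0)"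

definition fluid_model_solution ::
    "real \<Rightarrow> pt measure \<Rightarrow> pt measure \<Rightarrow> (real \<Rightarrow> pt measure) \<Rightarrow> bool" where
  "fluid_model_solution lam th \<zeta>0 \<zeta> \<longleftrightarrow>
     (\<forall>t\<ge>0. M1 (\<zeta> t)) \<and>
     weakly_continuous_on {0..} \<zeta> \<and>
     (\<forall>a>0. \<exists>c>0. \<forall>t>a. mass \<zeta> t \<ge> c) \<and>
     (\<forall>C\<in>corner_sets. \<forall>t\<ge>0.
        measure (\<zeta> t) C =
          measure \<zeta>0 (C \<oplus>\<^sub>s (Sint (mass \<zeta>) 0 t, ennreal t))
          + lam * (LBINT s:{0..t}. measure th (C \<oplus>\<^sub>s (Sint (mass \<zeta>) s t, ennreal (t - s)))))"

end

theory Submission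
  imports Defs
begin


lemma ennreal_Ici_plus: "(\<lambda>u. u + a) ` {x..} = {x + (a::ennreal)..}"
proof (intro set_eqI iffI)
  fix b assume "b \<in> (\<lambda>u. u + a) ` {x..}" then show "b \<in> {x + a..}" by (auto intro: add_right_mono)
next
  fix b assume b: "b \<in> {x + a..}"
  show "b \<in> (\<lambda>u. u + a) ` {x..}"
  proof (cases "a = \<infinity>")
    case True then have "b = \<infinity>" using b by (simp add: top_unique)
    then show ?thesis using True by (auto intro!: image_eqI[of _ _ x])
  next
    case False
    have "a \<le> b" using b by (metis add.commute atLeast_iff add_increasing2 order_trans order_refl zero_le)
    then have "b = (b - a) + a" using False by (simp add: diff_add_cancel_ennreal)
    moreover have "x \<le> b - a" using b False by (simp add: ennreal_le_minus_iff)
    ultimately show ?thesis by blast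
  qed
qed

lemma shift_corner: "({x..} \<times> {y..}) \<oplus>\<^sub>s (a,b) = {x+a..} \<times> {y+(b::ennreal)..}"
proof -
  have "({x..} \<times> {y..}) \<oplus>\<^sub>s (a,b) = ((\<lambda>u. u + a) ` {x..}) \<times> ((\<lambda>u. u + b) ` {y..})"
    unfolding shift_def by (auto simp: image_iff)
  then show ?thesis by (simp add: ennreal_Ici_plus)
qed

lemma corner_in: "{x..} \<times> {y..} \<in> corner_sets"
  unfolding corner_sets_def by blast

lemma AE_ne: "AE x in lborel. (x::real) \<noteq> c"
  by (simp add: AE_lborel_singleton)

lemma Sint_cong: "(\<And>r. u \<le> r \<Longrightarrow> r \<le> v \<Longrightarrow> z r = z' r) \<Longrightarrow> Sint z u v = Sint z' u v"
  unfolding Sint_def by (intro nn_integral_cong) (auto simp: indicator_def)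

lemma Sint_anti: "s \<le> s' \<Longrightarrow> Sint z s' v \<le> Sint z s v"
  unfolding Sint_def by (intro nn_integral_mono) (auto simp: indicator_def)

lemma Sint_add:
  assumes [measurable]: "z \<in> borel_measurable borel" and "s \<le> m" "m \<le> v"
  shows "Sint z s m + Sint z m v = Sint z s v"
proof -
  have "Sint z s m + Sint z m v = (\<integral>\<^sup>+ r. indicator {s..m} r * inverse (ennreal (z r)) + indicator {m..v} r * inverse (ennreal (z r)) \<partial>lborel)"
    unfolding Sint_def by (rule nn_integral_add[symmetric]) auto
  also have "\<dots> = Sint z s v"
    unfolding Sint_def
    by (rule nn_integral_cong_AE) (use AE_ne[of m] assms in \<open>auto simp: indicator_def elim!: eventually_mono\<close>)
  finally show ?thesis .
qed

lemma Sint_shift: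
  assumes [measurable]: "z \<in> borel_measurable borel"
  shows "Sint (\<lambda>r. z (c + r)) u v = Sint z (c+u) (c+v)"
proof -
  have "Sint z (c+u) (c+v) = (\<integral>\<^sup>+x. indicator {c+u..c+v} x * inverse (ennreal (z x)) \<partial>lborel)"
    unfolding Sint_def ..
  also have "\<dots> = (\<integral>\<^sup>+x. indicator {c+u..c+v} (c + x) * inverse (ennreal (z (c + x))) \<partial>lborel)"
    using nn_integral_real_affine[where c=1 and t=c and f="\<lambda>x. indicator {c+u..c+v} x * inverse (ennreal (z x))"] by simp
  also have "\<dots> = Sint (\<lambda>r. z (c + r)) u v"
    unfolding Sint_def by (intro nn_integral_cong) (auto simp: indicator_def)
  finally show ?thesis ..
qed


lemma mass_cont:
  assumes "fluid_model_solution lam th \<zeta>0 \<zeta>"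
  shows "continuous_on {0..} (mass \<zeta>)"
proof -
  have wc: "weakly_continuous_on {0..} \<zeta>" 
    using assms unfolding fluid_model_solution_def by blast
  have m1': "\<forall>t\<ge>0. M1 (\<zeta> t)"
    using assms unfolding fluid_model_solution_def by blast
  have m1: "M1 (\<zeta> t)" if "t \<ge> 0" for t using m1' that by blast
  have imp: "continuous_on UNIV (\<lambda>_::pt. 1::real) \<and> bounded (range (\<lambda>_::pt. 1::real)) \<longrightarrow>
      continuous_on {0..} (\<lambda>t. integral\<^sup>L (\<zeta> t) (\<lambda>_::pt. 1::real))"
    using wc unfolding weakly_continuous_on_def by (rule spec)
  have c1: "continuous_on UNIV (\<lambda>_::pt. 1::real)" by (rule continuous_on_const)
  have b1: "bounded (range (\<lambda>_::pt. 1::real))" by simp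
  have cont: "continuous_on {0..} (\<lambda>t. integral\<^sup>L (\<zeta> t) (\<lambda>_::pt. 1::real))"
    using imp c1 b1 by blast
  have eqf: "integral\<^sup>L (\<zeta> t) (\<lambda>_. 1::real) = mass \<zeta> t" if "t \<in> {0..}" for t
  proof -
    have "sets (\<zeta> t) = sets (borel::pt measure)" using m1[of t] that unfolding M1_def by simp
    then have "space (\<zeta> t) = space (borel::pt measure)" by (rule sets_eq_imp_space_eq)
    then have "space (\<zeta> t) = UNIV" by simp
    then show ?thesis by (simp add: mass_def)
  qed
  show ?thesis by (rule iffD1[OF continuous_on_cong[OF refl eqf] cont])
qed

lemma zz_meas:
  assumes "continuous_on {0..} (z::real\<Rightarrow>real)"
  shows "(\<lambda>r. z (max 0 r)) \<in> borel_measurable borel"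
proof -
  have "continuous_on UNIV (\<lambda>r. z (max 0 r))"
    by (rule continuous_on_compose2[OF assms]) (auto intro!: continuous_intros)
  then show ?thesis by (rule borel_measurable_continuous_onI)
qed

lemma corner_sets_borel: "{a..} \<times> {b..} \<in> sets (borel :: pt measure)"
  by (intro borel_closed closed_Times closed_atLeast)

theorem mainTheorem4:
  fixes lam :: real and th \<zeta>0 :: "pt measure" and \<zeta> :: "real \<Rightarrow> pt measure" and t0 :: real
  assumes "fluid_model_data lam th \<zeta>0"
    and "fluid_model_solution lam th \<zeta>0 \<zeta>"
    and "t0 > 0"
  shows "\<forall>t\<ge>0.
    mass \<zeta> (t0 + t) =
      measure (\<zeta> t0) ({Sint (\<lambda>r. mass \<zeta> (t0 + r)) 0 t..} \<times> {ennreal t..})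
      + lam * (LBINT s:{0..t}.
          measure th ({Sint (\<lambda>r. mass \<zeta> (t0 + r)) s t..} \<times> {ennreal (t - s)..}))"
proof (intro allI impI)
  fix t :: real assume t: "t \<ge> 0"
  define z where "z = mass \<zeta>"
  define zz where "zz = (\<lambda>r. z (max 0 r))"
  define v where "v = t0 + t"
  have t0: "t0 > 0" using assms(3) .
  have v0: "0 \<le> v" using t t0 by (simp add: v_def)
  have zzm[measurable]: "zz \<in> borel_measurable borel"
    unfolding zz_def z_def by (rule zz_meas[OF mass_cont[OF assms(2)]])
  have pth: "prob_space th" and sth: "sets th = sets (borel :: pt measure)"
    using assms(1) unfolding fluid_model_data_def by auto
  interpret th: prob_space th by (rule pth)
  have eq: "\<And>C t. C \<in> corner_sets \<Longrightarrow> t \<ge> 0 \<Longrightarrow>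
        measure (\<zeta> t) C =
          measure \<zeta>0 (C \<oplus>\<^sub>s (Sint z 0 t, ennreal t))
          + lam * (LBINT s:{0..t}. measure th (C \<oplus>\<^sub>s (Sint z s t, ennreal (t - s))))"
    using assms(2) unfolding fluid_model_solution_def z_def by blast
  have Szz: "Sint z u w = Sint zz u w" if "u \<ge> 0" for u w
    by (rule Sint_cong) (use that in \<open>auto simp: zz_def\<close>)
  have Sadd: "Sint z s m + Sint z m w = Sint z s w" if "0 \<le> s" "s \<le> m" "m \<le> w" for s m w
    using Sint_add[OF zzm that(2,3)] that Szz by simp
  have Sshift: "Sint (\<lambda>r. z (t0 + r)) u w = Sint z (t0 + u) (t0 + w)" if "u \<ge> 0" for u w
  proof -
    have "Sint (\<lambda>r. z (t0 + r)) u w = Sint (\<lambda>r. zz (t0 + r)) u w"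
      by (rule Sint_cong) (use that t0 in \<open>auto simp: zz_def\<close>)
    also have "\<dots> = Sint zz (t0 + u) (t0 + w)" by (rule Sint_shift[OF zzm])
    also have "\<dots> = Sint z (t0 + u) (t0 + w)" using Szz[of "t0+u" "t0+w"] that t0 by simp
    finally show ?thesis .
  qed
  define F where "F s = measure th ({Sint z s v..} \<times> {ennreal (v - s)..})" for s
  have Fmono: "mono F"
  proof (rule monoI)
    fix s s' :: real assume "s \<le> s'"
    then have "{Sint z s v..} \<times> {ennreal (v - s)..} \<subseteq> {Sint z s' v..} \<times> {ennreal (v - s')..}"
      using Sint_anti[of s s' z v] ennreal_leI[of "v - s'" "v - s"] by (auto intro: order_trans)
    then show "F s \<le> F s'" unfolding F_def
      by (rule th.finite_measure_mono) (simp add: sth corner_sets_borel)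
  qed
  have Fm[measurable]: "F \<in> borel_measurable borel" by (rule borel_measurable_mono[OF Fmono])
  have Fb: "norm (F s) \<le> 1" for s
    unfolding F_def using th.prob_le_1 by simp
  have Fint: "set_integrable lborel {a..b} F" for a b
    unfolding set_integrable_def
    by (rule integrableI_bounded_set_indicator[where B=1]) (use Fb in \<open>auto simp: emeasure_lborel_Icc_eq\<close>)
  have E1: "mass \<zeta> v = measure \<zeta>0 ({Sint z 0 v..} \<times> {ennreal v..}) + lam * (LBINT s:{0..v}. F s)"
  proof -
    have "mass \<zeta> v = measure (\<zeta> v) ({0..} \<times> {0..})" proof -
      have "({0..}::ennreal set) = UNIV" by auto
      then show ?thesis by (simp add: mass_def)
    qed
    also have "\<dots> = measure \<zeta>0 ({Sint z 0 v..} \<times> {ennreal v..}) + lam * (LBINT s:{0..v}. F s)"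
      using eq[OF corner_in[of 0 0], of v] v0 unfolding F_def v_def[symmetric] shift_corner by simp
    finally show ?thesis .
  qed
  define a where "a = Sint z t0 v"
  have E2: "measure (\<zeta> t0) ({a..} \<times> {ennreal t..}) = measure \<zeta>0 ({Sint z 0 v..} \<times> {ennreal v..}) + lam * (LBINT s:{0..t0}. F s)"
  proof -
    have H0: "measure (\<zeta> t0) ({a..} \<times> {ennreal t..}) = measure \<zeta>0 ({a + Sint z 0 t0..} \<times> {ennreal t + ennreal t0..})
       + lam * (LBINT s:{0..t0}. measure th ({a + Sint z s t0..} \<times> {ennreal t + ennreal (t0 - s)..}))"
      using eq[OF corner_in[of a "ennreal t"] less_imp_le[OF t0]] unfolding shift_corner .
    have H1: "a + Sint z 0 t0 = Sint z 0 v" 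
    proof -
      have "Sint z 0 t0 + Sint z t0 v = Sint z 0 v" by (rule Sadd) (use t t0 in \<open>auto simp: v_def\<close>)
      then show ?thesis unfolding a_def by (metis add.commute)
    qed
    have H2: "ennreal t + ennreal t0 = ennreal v" using ennreal_plus[of t t0] t t0 unfolding v_def by (simp add: add.commute del: ennreal_plus)
    have H3: "(LBINT s:{0..t0}. measure th ({a + Sint z s t0..} \<times> {ennreal t + ennreal (t0 - s)..})) = (LBINT s:{0..t0}. F s)"
    proof (rule set_lebesgue_integral_cong; (intro allI impI)?)
      show "{0..t0} \<in> sets lborel" by simp
      fix s assume s: "s \<in> {0..t0}"
      have "a + Sint z s t0 = Sint z s v"
      proof -
        have "Sint z s t0 + Sint z t0 v = Sint z s v" by (rule Sadd) (use s t t0 in \<open>auto simp: v_def\<close>)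
        then show ?thesis unfolding a_def by (metis add.commute)
      qed
      moreover have "ennreal t + ennreal (t0 - s) = ennreal (v - s)"
        using ennreal_plus[of t "t0 - s"] s t unfolding v_def by (simp add: algebra_simps del: ennreal_plus)
      ultimately show "measure th ({a + Sint z s t0..} \<times> {ennreal t + ennreal (t0 - s)..}) = F s"
        unfolding F_def by simp
    qed
    show ?thesis using H0 unfolding H1 H2 H3 .
  qed
  have E3: "(LBINT s:{0..t}. measure th ({Sint (\<lambda>r. mass \<zeta> (t0 + r)) s t..} \<times> {ennreal (t - s)..}))
      = (LBINT s:{0..t}. F (t0 + s))"
  proof (rule set_lebesgue_integral_cong; (intro allI impI)?)
    show "{0..t} \<in> sets lborel" by simp
    fix s assume s: "s \<in> {0..t}"
    have 1: "Sint (\<lambda>r. mass \<zeta> (t0 + r)) s t = Sint z (t0 + s) v"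
      using Sshift[of s t] s unfolding v_def z_def by simp
    have 2: "ennreal (t - s) = ennreal (v - (t0 + s))" by (simp add: v_def)
    show "measure th ({Sint (\<lambda>r. mass \<zeta> (t0 + r)) s t..} \<times> {ennreal (t - s)..}) = F (t0 + s)"
      unfolding F_def 1 2 ..
  qed
  have E4: "(LBINT s:{0..t}. F (t0 + s)) = (LBINT s:{t0..v}. F s)"
  proof -
    have A: "(\<integral>x. indicator {t0..v} x *\<^sub>R F x \<partial>lborel) = \<bar>1\<bar> *\<^sub>R (\<integral>x. indicator {t0..v} (t0 + 1 * x) *\<^sub>R F (t0 + 1 * x) \<partial>lborel)"
      by (rule lborel_integral_real_affine) simp
    have B: "indicator {t0..v} (t0 + x) = (indicator {0..t} x :: real)" for x
      by (auto simp: indicator_def v_def)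
    show ?thesis using A unfolding set_lebesgue_integral_def B abs_one scaleR_one mult_1 by simp
  qed
  have E5: "(LBINT s:{0..v}. F s) = (LBINT s:{0..t0}. F s) + (LBINT s:{t0..v}. F s)"
  proof -
    have U: "{0..v} = {0..t0} \<union> {t0..v}" using t t0 v_def by auto
    have "(LBINT s:{0..t0} \<union> {t0..v}. F s) = (LBINT s:{0..t0}. F s) + (LBINT s:{t0..v}. F s)"
    proof (rule set_integral_Un_AE)
      show "AE x in lborel. \<not> (x \<in> {0..t0} \<and> x \<in> {t0..v})"
        using AE_ne[of t0] by (rule eventually_mono) auto
      show "{0..t0} \<in> sets lborel" by simp
      show "{t0..v} \<in> sets lborel" by simp
      show "set_integrable lborel {0..t0} F" by (rule Fint)
      show "set_integrable lborel {t0..v} F" by (rule Fint)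
    qed
    then show ?thesis unfolding U .
  qed
  have Sa: "Sint (\<lambda>r. mass \<zeta> (t0 + r)) 0 t = a"
    using Sshift[of 0 t] unfolding a_def v_def z_def by simp
  have mv: "mass \<zeta> (t0 + t) = mass \<zeta> v" by (simp add: v_def)
  show "mass \<zeta> (t0 + t) =
      measure (\<zeta> t0) ({Sint (\<lambda>r. mass \<zeta> (t0 + r)) 0 t..} \<times> {ennreal t..})
      + lam * (LBINT s:{0..t}.
          measure th ({Sint (\<lambda>r. mass \<zeta> (t0 + r)) s t..} \<times> {ennreal (t - s)..}))"
    unfolding Sa E3 E4 mv E1 E2 E5 by (simp only: distrib_left add.assoc)
qed

end
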